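(* For any dimension $d$ and any target accuracy $\epsilon>0$, there exists a ReLU neural network $\mathcal N:\mathbb{R}^d\to\mathbb{R}$ of depth $3$ and width $\mathcal O(d^{2})$, with magnitude of weights bounded by $\frac{12d^4}{\epsilon}$, such that \[ \operatorname*{\mathbb{E}}_{\mathbf{x} \sim \mathcal{U}([0,1]^d)} \left[ \left( \mathcal N(\mathbf{x}) - \operatorname{med}(\mathbf{x})\right)^2 \right] \leq \epsilon . \]
   Context: $\operatorname{med}(\mathbf{x})$ denotes the median of the entries of $\mathbf{x}\in\mathbb{R}^d$, and $\mathcal U([0,1]^d)$ the uniform distribution on the unit hypercube. A ReLU network is a fully connected feed-forward network whose hidden neurons apply $[z]_+=\max\{0,z\}$ after an affine map, followed by an affine output neuron. The depth of a network is the number of hidden layers plus one; the width is the number of neurons in the largest hidden layer. *)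

theory Defs
  imports "HOL-Probability.Probability"
begin

text \<open>Points of R^d are represented as functions nat => real; only the
  coordinates 0..d-1 are relevant.\<close>

definition relu :: "real \<Rightarrow> real" where
  "relu z = max 0 z"

definition med :: "nat \<Rightarrow> (nat \<Rightarrow> real) \<Rightarrow> real" where
  "med d x = (let xs = sort (map x [0..<d]) in
     if odd d then xs ! (d div 2)
     else (xs ! (d div 2 - 1) + xs ! (d div 2)) / 2)"

definition net3 :: "nat \<Rightarrow> nat \<Rightarrow> nat \<Rightarrow> (nat \<Rightarrow> nat \<Rightarrow> real) \<Rightarrow> (nat \<Rightarrow> real)
    \<Rightarrow> (nat \<Rightarrow> nat \<Rightarrow> real) \<Rightarrow> (nat \<Rightarrow> real) \<Rightarrow> (nat \<Rightarrow> real) \<Rightarrow> real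
    \<Rightarrow> (nat \<Rightarrow> real) \<Rightarrow> real" where
  "net3 d k1 k2 W1 b1 W2 b2 w3 b3 x =
     (\<Sum>j<k2. w3 j * relu ((\<Sum>i<k1. W2 j i * relu ((\<Sum>l<d. W1 i l * x l) + b1 i)) + b2 j)) + b3"

definition params_bounded :: "nat \<Rightarrow> nat \<Rightarrow> nat \<Rightarrow> (nat \<Rightarrow> nat \<Rightarrow> real) \<Rightarrow> (nat \<Rightarrow> real)
    \<Rightarrow> (nat \<Rightarrow> nat \<Rightarrow> real) \<Rightarrow> (nat \<Rightarrow> real) \<Rightarrow> (nat \<Rightarrow> real) \<Rightarrow> real \<Rightarrow> real \<Rightarrow> bool" where
  "params_bounded d k1 k2 W1 b1 W2 b2 w3 b3 B \<longleftrightarrow>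
     (\<forall>i<k1. \<forall>l<d. \<bar>W1 i l\<bar> \<le> B) \<and> (\<forall>i<k1. \<bar>b1 i\<bar> \<le> B) \<and>
     (\<forall>j<k2. \<forall>i<k1. \<bar>W2 j i\<bar> \<le> B) \<and> (\<forall>j<k2. \<bar>b2 j\<bar> \<le> B) \<and>
     (\<forall>j<k2. \<bar>w3 j\<bar> \<le> B) \<and> \<bar>b3\<bar> \<le> B"

definition unif_cube :: "nat \<Rightarrow> (nat \<Rightarrow> real) measure" where
  "unif_cube d = PiM {..<d} (\<lambda>_. uniform_measure lborel {0..1::real})"

end

theory Submission
  imports Defs
begin


lemma count_sum: "(\<Sum>j<(d::nat). if P j then 1 else 0::nat) = card {j. j < d \<and> P j}"
proof -
  have "(\<Sum>j<d. if P j then 1 else 0::nat) = sum (\<lambda>_. 1) ({..<d} \<inter> {j. P j})"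
    by (subst sum.inter_restrict) auto
  also have "\<dots> = card ({..<d} \<inter> {j. P j})" by simp
  also have "{..<d} \<inter> {j. P j} = {j. j < d \<and> P j}" by auto
  finally show ?thesis .
qed

lemma cnt_sorted:
  fixes x :: "nat \<Rightarrow> real" and d :: nat
  defines "L \<equiv> sort (map x [0..<d])"
  shows "card {j. j < d \<and> x j < y} = card {p. p < d \<and> L ! p < y}"
proof -
  have "card {j. j < d \<and> x j < y} = length (filter (\<lambda>z. z < y) (map x [0..<d]))"
    by (simp add: length_filter_conv_card) (intro arg_cong[where f=card], auto)
  also have "\<dots> = length (filter (\<lambda>z. z < y) L)"
    unfolding L_def by (metis mset_filter mset_sort size_mset)
  also have "\<dots> = card {p. p < d \<and> L ! p < y}"
    by (simp add: length_filter_conv_card L_def)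
  finally show ?thesis .
qed

lemma cnt_le_iff:
  fixes x :: "nat \<Rightarrow> real" and d :: nat
  defines "L \<equiv> sort (map x [0..<d])"
  assumes r: "r < d"
  shows "card {j. j < d \<and> x j < y} \<le> r \<longleftrightarrow> y \<le> L ! r"
proof -
  have len: "length L = d" by (simp add: L_def)
  have srt: "sorted L" by (simp add: L_def)
  show ?thesis
  proof
    assume h: "card {j. j < d \<and> x j < y} \<le> r"
    show "y \<le> L ! r"
    proof (rule ccontr)
      assume "\<not> y \<le> L ! r"
      then have "{..r} \<subseteq> {p. p < d \<and> L ! p < y}"
        using r srt len by (auto dest!: sorted_nth_mono[of L _ r] intro: order.strict_trans1)
      then have "card {..r} \<le> card {p. p < d \<and> L ! p < y}"
        by (intro card_mono) auto
      then show False using h cnt_sorted[of d x y] by (simp add: L_def)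
    qed
  next
    assume h: "y \<le> L ! r"
    have "{p. p < d \<and> L ! p < y} \<subseteq> {..<r}"
    proof
      fix p assume p: "p \<in> {p. p < d \<and> L ! p < y}"
      show "p \<in> {..<r}"
      proof (rule ccontr)
        assume "p \<notin> {..<r}"
        then have "L ! r \<le> L ! p" using p srt len by (auto intro: sorted_nth_mono)
        then show False using p h by auto
      qed
    qed
    then have "card {p. p < d \<and> L ! p < y} \<le> r"
      by (metis card_lessThan card_mono finite_lessThan)
    then show "card {j. j < d \<and> x j < y} \<le> r" using cnt_sorted[of d x y] by (simp add: L_def)
  qed
qed

lemma nth_sort_in:
  fixes x :: "nat \<Rightarrow> real" and d :: nat
  assumes "r < d"
  shows "\<exists>i<d. sort (map x [0..<d]) ! r = x i"
proof -
  have "sort (map x [0..<d]) ! r \<in> set (sort (map x [0..<d]))"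
    using assms by (intro nth_mem) simp
  then show ?thesis by auto
qed

definition ostat :: "nat \<Rightarrow> (nat \<Rightarrow> real) \<Rightarrow> nat \<Rightarrow> real" where
  "ostat d x r = Max ((\<lambda>i. if (\<Sum>j<d. if x j < x i then 1 else 0::nat) \<le> r then x i
       else Min ((\<lambda>i. x i) ` {..<d})) ` {..<d})"

lemma ostat_eq:
  fixes x :: "nat \<Rightarrow> real" and d :: nat
  assumes r: "r < d"
  shows "sort (map x [0..<d]) ! r = ostat d x r"
proof -
  let ?L = "sort (map x [0..<d])"
  obtain i0 where i0: "i0 < d" "?L ! r = x i0" using nth_sort_in[OF r] by blast
  let ?g = "\<lambda>i. if (\<Sum>j<d. if x j < x i then 1 else 0::nat) \<le> r then x i
       else Min ((\<lambda>i. x i) ` {..<d})"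
  have c: "(\<Sum>j<d. if x j < x i then 1 else 0::nat) \<le> r \<longleftrightarrow> x i \<le> ?L ! r" for i
    unfolding count_sum using cnt_le_iff[OF r, of x "x i"] by simp
  have mn: "Min ((\<lambda>i. x i) ` {..<d}) \<le> ?L ! r"
    using i0 by (intro Min_le_iff[THEN iffD2]) auto
  show ?thesis unfolding ostat_def
  proof (rule Max_eqI[symmetric])
    show "finite (?g ` {..<d})" by simp
    show "y \<le> ?L ! r" if "y \<in> ?g ` {..<d}" for y
      using that c mn by auto
    show "?L ! r \<in> ?g ` {..<d}"
      using i0 c by (intro image_eqI[of _ _ i0]) auto
  qed
qed

lemma meas_ostat: "(\<lambda>x. ostat d x r) \<in> borel_measurable (unif_cube d)"
  unfolding ostat_def unif_cube_def by measurable

definition r0 :: "nat \<Rightarrow> nat" where "r0 d = (if odd d then d div 2 else d div 2 - 1)"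

lemma r0_less: "1 \<le> d \<Longrightarrow> r0 d < d" by (auto simp: r0_def)
lemma r1_less: "1 \<le> d \<Longrightarrow> d div 2 < (d::nat)" by auto

lemma med_alt: "1 \<le> d \<Longrightarrow> med d x = (sort (map x [0..<d]) ! r0 d + sort (map x [0..<d]) ! (d div 2)) / 2"
  by (auto simp: med_def r0_def Let_def)

lemma meas_med: "1 \<le> d \<Longrightarrow> (\<lambda>x. med d x) \<in> borel_measurable (unif_cube d)"
proof -
  assume d: "1 \<le> d"
  have "med d x = (ostat d x (r0 d) + ostat d x (d div 2)) / 2" for x
    unfolding med_alt[OF d] ostat_eq[OF r0_less[OF d]] ostat_eq[OF r1_less[OF d]] ..
  then have "(\<lambda>x. med d x) = (\<lambda>x. (ostat d x (r0 d) + ostat d x (d div 2)) / 2)"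
    by auto
  moreover have "(\<lambda>x. (ostat d x (r0 d) + ostat d x (d div 2)) / 2) \<in> borel_measurable (unif_cube d)"
    by (intro borel_measurable_divide borel_measurable_add meas_ostat measurable_const) auto
  ultimately show ?thesis by simp
qed

lemma med_bound:
  assumes d: "1 \<le> d" and x: "\<forall>i<d. 0 \<le> x i \<and> x i \<le> 1"
  shows "0 \<le> med d x \<and> med d x \<le> 1"
proof -
  obtain i0 where i0: "i0 < d" "sort (map x [0..<d]) ! r0 d = x i0" using nth_sort_in r0_less d by blast
  obtain i1 where i1: "i1 < d" "sort (map x [0..<d]) ! (d div 2) = x i1" using nth_sort_in r1_less d by blast
  have "0 \<le> x i0" "x i0 \<le> 1" "0 \<le> x i1" "x i1 \<le> 1" using i0 i1 x by auto
  then show ?thesis unfolding med_alt[OF d] i0(2) i1(2) by auto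
qed

abbreviation U where "U \<equiv> uniform_measure lborel {0..1::real}"

lemma U_prob: "prob_space U"
  by (rule prob_space_uniform_measure) auto

lemma cube_prob: "prob_space (unif_cube d)"
  unfolding unif_cube_def by (rule prob_space_PiM) (rule U_prob)

lemma AE_U: "AE x in U. 0 \<le> x \<and> x \<le> 1"
  by (rule AE_uniform_measureI) auto

lemma AE_cube: "AE x in unif_cube d. \<forall>i<d. 0 \<le> x i \<and> x i \<le> 1"
proof -
  have "AE x in unif_cube d. 0 \<le> x i \<and> x i \<le> 1" if "i < d" for i
    unfolding unif_cube_def
    by (rule AE_PiM_component[where P="\<lambda>y. 0 \<le> y \<and> y \<le> 1"]) (use that U_prob AE_U in auto)
  then have "\<forall>i\<in>{..<d}. AE x in unif_cube d. 0 \<le> x i \<and> x i \<le> 1" by auto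
  then have "AE x in unif_cube d. \<forall>i\<in>{..<d}. 0 \<le> x i \<and> x i \<le> 1"
    by (subst AE_finite_all) auto
  then show ?thesis by auto
qed

lemma grid_cell:
  fixes t :: real and K :: nat
  assumes "0 \<le> t" "t \<le> 1" "1 \<le> K"
  shows "\<exists>k<K. real k / K \<le> t \<and> t \<le> (real k + 1) / K"
proof (cases "t = 1")
  case True
  have e: "real (K - 1) + 1 = real K" using assms by (simp add: of_nat_diff)
  have K0: "real K > 0" using assms by simp
  have "real (K - 1) / K \<le> t" using True e K0 by (simp add: pos_divide_le_eq)
  moreover have "t \<le> (real (K - 1) + 1) / K" using True e K0 by simp
  moreover have "K - 1 < K" using assms by simp
  ultimately show ?thesis by blast
next
  case False
  define k where "k = nat \<lfloor>t * K\<rfloor>"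
  have f0: "0 \<le> \<lfloor>t * K\<rfloor>" using assms by simp
  have k: "real k = of_int \<lfloor>t * K\<rfloor>" using f0 by (simp add: k_def)
  have "t * K < K" using assms False by simp
  then have "real k < K" using k by linarith
  then have "k < K" by simp
  moreover have "real k \<le> t * K" "t * K \<le> real k + 1" using k by linarith+
  moreover have K0: "real K > 0" using assms by simp
  ultimately have "real k / K \<le> t" "t \<le> (real k + 1) / K"
    by (simp_all add: pos_divide_le_eq pos_le_divide_eq mult.commute)
  with \<open>k < K\<close> show ?thesis by blast
qed

lemma prod_two:
  assumes "finite S" "i \<in> S" "j \<in> S" "i \<noteq> j"
  shows "(\<Prod>l\<in>S. if l = j then a else if l = i then b else 1) = (a * b :: 'a::comm_monoid_mult)"
proof -
  have "(\<Prod>l\<in>S. if l = j then a else if l = i then b else 1) =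
     a * (\<Prod>l\<in>S - {j}. if l = j then a else if l = i then b else 1)"
    using assms by (subst prod.remove[of _ j]) auto
  also have "(\<Prod>l\<in>S - {j}. if l = j then a else if l = i then b else 1) =
     b * (\<Prod>l\<in>S - {j} - {i}. if l = j then a else if l = i then b else 1)"
    using assms by (subst prod.remove[of _ i]) auto
  also have "(\<Prod>l\<in>S - {j} - {i}. if l = j then a else if l = i then b else 1) = 1"
    by (intro prod.neutral) auto
  finally show ?thesis by simp
qed

lemma space_cube: "space (unif_cube d) = PiE {..<d} (\<lambda>_. UNIV)"
  unfolding unif_cube_def by (simp add: space_PiM)

lemma U_le_lborel:
  assumes "B \<in> sets borel"
  shows "emeasure U B \<le> emeasure lborel B"
proof -
  have "emeasure U B = emeasure lborel ({0..1} \<inter> B) / emeasure lborel {0..1::real}"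
    using assms by (subst emeasure_uniform_measure) auto
  also have "\<dots> = emeasure lborel ({0..1} \<inter> B)" by (simp add: divide_ennreal_def)
  also have "\<dots> \<le> emeasure lborel B" using assms by (intro emeasure_mono) auto
  finally show ?thesis .
qed

lemma pair_close:
  assumes ij: "i < d" "j < d" "i \<noteq> j" and dl: "0 < \<delta>"
  shows "measure (unif_cube d) {x \<in> space (unif_cube d). 0 \<le> x j \<and> x j \<le> 1 \<and> \<bar>x i - x j\<bar> < \<delta>} \<le> 3 * \<delta>"
proof -
  interpret P: product_prob_space "\<lambda>_. U" "{..<d}"
    using U_prob by (simp add: product_prob_space_def product_prob_space_axioms_def
        product_sigma_finite_def prob_space_imp_sigma_finite)
  interpret C: prob_space "unif_cube d" by (rule cube_prob)
  define K where "K = nat \<lceil>4 / \<delta>\<rceil>"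
  have K4: "real K \<ge> 4 / \<delta>" unfolding K_def by linarith
  have Kpos: "real K > 0" using K4 dl by (smt (verit) divide_pos_pos)
  then have K1: "1 \<le> K" by simp
  have invK: "1 / real K \<le> \<delta> / 4" using K4 dl Kpos by (simp add: field_simps)
  define A where "A k l = (if l = j then {real k / K .. (real k + 1) / K}
      else if l = i then {real k / K - \<delta> <..< (real k + 1) / K + \<delta>} else UNIV)" for k l
  define S where "S = {x \<in> space (unif_cube d). 0 \<le> x j \<and> x j \<le> 1 \<and> \<bar>x i - x j\<bar> < \<delta>}"
  have Asets: "A k l \<in> sets borel" for k l unfolding A_def by auto
  have boxsets: "PiE {..<d} (A k) \<in> sets (unif_cube d)" for k
    unfolding unif_cube_def by (intro sets_PiM_I_finite) (auto simp: Asets)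
  have sub: "S \<subseteq> (\<Union>k\<in>{..<K}. PiE {..<d} (A k))"
  proof
    fix x assume xS: "x \<in> S"
    then have xsp: "x \<in> PiE {..<d} (\<lambda>_. UNIV)" and xj: "0 \<le> x j" "x j \<le> 1"
      and xi: "\<bar>x i - x j\<bar> < \<delta>"
      by (auto simp: S_def space_cube)
    obtain k where k: "k < K" "real k / K \<le> x j" "x j \<le> (real k + 1) / K"
      using grid_cell[OF xj K1] by blast
    have "x \<in> PiE {..<d} (A k)"
      using xsp k xi by (auto simp: A_def PiE_iff)
    then show "x \<in> (\<Union>k\<in>{..<K}. PiE {..<d} (A k))" using k by blast
  qed
  have box: "emeasure (unif_cube d) (PiE {..<d} (A k)) \<le> ennreal (1 / K) * ennreal (2 * \<delta> + 1 / K)" for k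
  proof -
    have "emeasure (unif_cube d) (PiE {..<d} (A k)) = (\<Prod>l\<in>{..<d}. emeasure U (A k l))"
      unfolding unif_cube_def by (rule P.emeasure_PiM) (auto simp: Asets)
    also have "\<dots> = (\<Prod>l\<in>{..<d}. if l = j then emeasure U (A k j) else if l = i then emeasure U (A k i) else 1)"
      by (intro prod.cong refl) (auto simp: A_def P.emeasure_space_1[simplified])
    also have "\<dots> = emeasure U (A k j) * emeasure U (A k i)"
      using ij by (intro prod_two) auto
    also have "\<dots> \<le> emeasure lborel (A k j) * emeasure lborel (A k i)"
      by (intro mult_mono U_le_lborel) (auto simp: A_def)
    also have "emeasure lborel (A k j) = ennreal (1 / K)"
      using Kpos by (simp add: A_def divide_right_mono diff_divide_distrib[symmetric])
    also have "emeasure lborel (A k i) = ennreal (2 * \<delta> + 1 / K)"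
    proof -
      have e: "(real k + 1) / K + \<delta> - (real k / K - \<delta>) = 2 * \<delta> + 1 / K"
        by (simp add: add_divide_distrib)
      have le: "real k / K - \<delta> \<le> (real k + 1) / K + \<delta>" using e dl Kpos
        by (smt (verit) divide_pos_pos)
      have Aki: "A k i = {real k / K - \<delta> <..< (real k + 1) / K + \<delta>}" using ij by (simp add: A_def)
      show ?thesis unfolding Aki emeasure_lborel_Ioo[OF le] e ..
    qed
    finally show ?thesis .
  qed
  have "emeasure (unif_cube d) S \<le> emeasure (unif_cube d) (\<Union>k\<in>{..<K}. PiE {..<d} (A k))"
    using sub boxsets by (intro emeasure_mono) auto
  also have "\<dots> \<le> (\<Sum>k<K. emeasure (unif_cube d) (PiE {..<d} (A k)))"
    using boxsets by (intro emeasure_subadditive_finite) auto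
  also have "\<dots> \<le> (\<Sum>k<K. ennreal (1 / K) * ennreal (2 * \<delta> + 1 / K))"
    by (intro sum_mono box)
  also have "\<dots> = ennreal (real K * ((1 / K) * (2 * \<delta> + 1 / K)))"
  proof -
    have h1: "ennreal (1 / K) * ennreal (2 * \<delta> + 1 / K) = ennreal (1 / K * (2 * \<delta> + 1 / K))"
      by (rule ennreal_mult'[symmetric]) simp
    show ?thesis
      unfolding sum_constant card_lessThan h1 ennreal_of_nat_eq_real_of_nat
      by (rule ennreal_mult'[symmetric]) simp
  qed
  also have "real K * ((1 / K) * (2 * \<delta> + 1 / K)) = 2 * \<delta> + 1 / K"
    using Kpos by simp
  also have "ennreal (2 * \<delta> + 1 / K) \<le> ennreal (3 * \<delta>)"
    using invK dl by (intro ennreal_leI) simp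
  finally have "emeasure (unif_cube d) S \<le> ennreal (3 * \<delta>)" .
  then show ?thesis using dl unfolding S_def C.emeasure_eq_measure by simp
qed




lemma relu_pos: "0 \<le> z \<Longrightarrow> relu z = z" by (simp add: relu_def)
lemma relu_neg: "z \<le> 0 \<Longrightarrow> relu z = 0" by (simp add: relu_def)
lemma relu_nonneg: "0 \<le> relu z" by (simp add: relu_def)

lemma sum_delta_mult: "j < d \<Longrightarrow> (\<Sum>l<(d::nat). (if l = j then 1 else 0) * (y l::real)) = y j"
  by (simp add: if_distrib[of "\<lambda>t. t * _"] cong: if_cong)

lemma sum_delta_mult': "j < d \<Longrightarrow> (\<Sum>l<(d::nat). (y l::real) * (if l = j then 1 else 0)) = y j"
  using sum_delta_mult[of j d y] by (simp add: mult.commute)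

lemma sum_blocks: "(\<Sum>n<a*b. f n) = (\<Sum>u<a. \<Sum>v<b. f (u*b+v::nat))"
proof -
  have "(\<Sum>n<a*b. f n) = (\<Sum>u<a. sum f {u*b..<u*b+b})"
    by (rule sum.nat_group[symmetric])
  also have "\<dots> = (\<Sum>u<a. \<Sum>v<b. f (u*b+v))"
  proof -
    have inner: "sum f {u*b..<u*b+b} = (\<Sum>v<b. f (u*b+v))" for u
    proof -
      have e: "{u*b..<u*b+b} = {0+u*b..<b+u*b}" by (simp add: add.commute)
      show ?thesis unfolding e sum.shift_bounds_nat_ivl atLeast0LessThan by (simp add: add.commute)
    qed
    show ?thesis by (simp add: inner)
  qed
  finally show ?thesis .
qed

lemma sum_split_add: "(\<Sum>u<a+b. f u) = (\<Sum>u<a. f u) + (\<Sum>u<b. f (a+u::nat))"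
  by (induction b) (auto simp: add.assoc)

definition W1 :: "nat \<Rightarrow> real \<Rightarrow> nat \<Rightarrow> nat \<Rightarrow> real" where
  "W1 d M n l = (let u = n div d; v = n mod d in
    if u < d then M * ((if l = u then 1 else 0) - (if l = v then 1 else 0))
    else if u < 2*d then M * ((if l = u - d then 1 else 0) - (if l = v then 1 else 0))
    else (if l = v then 1 else 0))"

definition b1 :: "nat \<Rightarrow> nat \<Rightarrow> real" where
  "b1 d n = (if d \<le> n div d \<and> n div d < 2*d then -1 else 0)"

definition L1 :: "real \<Rightarrow> nat \<Rightarrow> (nat \<Rightarrow> real) \<Rightarrow> nat \<Rightarrow> nat \<Rightarrow> real" where
  "L1 M d x u v = (if u < d then relu (M * (x u - x v))
     else if u < 2*d then relu (M * (x (u - d) - x v) - 1) else relu (x v))"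

lemma divmod_blk: "v < d \<Longrightarrow> (u * d + v) div d = u" "v < d \<Longrightarrow> (u * d + v) mod (d::nat) = v"
  by auto

lemma L1_eval:
  assumes "u < 2*d+1" "v < d"
  shows "relu ((\<Sum>l<d. W1 d M (u*d+v) l * x l) + b1 d (u*d+v)) = L1 M d x u v"
proof -
  have dv: "(u * d + v) div d = u" "(u * d + v) mod d = v" using assms by auto
  consider "u < d" | "d \<le> u" "u < 2*d" | "u = 2*d" using assms by linarith
  then show ?thesis
  proof cases
    case 1
    have W: "W1 d M (u*d+v) l = M * ((if l = u then 1 else 0) - (if l = v then 1 else 0))" for l
      using 1 unfolding W1_def Let_def dv by simp
    have "(\<Sum>l<d. W1 d M (u*d+v) l * x l) = (\<Sum>l<d. M * ((if l = u then 1 else 0) * x l) - M * ((if l = v then 1 else 0) * x l))"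
      unfolding W by (intro sum.cong refl) (simp add: algebra_simps)
    also have "\<dots> = M * (x u - x v)" using 1 assms
      by (simp add: sum_subtractf sum_distrib_left[symmetric] sum_delta_mult sum_delta_mult' algebra_simps)
    finally show ?thesis using 1 dv by (simp add: b1_def L1_def)
  next
    case 2
    have W: "W1 d M (u*d+v) l = M * ((if l = u - d then 1 else 0) - (if l = v then 1 else 0))" for l
      using 2 unfolding W1_def Let_def dv by simp
    have "(\<Sum>l<d. W1 d M (u*d+v) l * x l) = (\<Sum>l<d. M * ((if l = u - d then 1 else 0) * x l) - M * ((if l = v then 1 else 0) * x l))"
      unfolding W by (intro sum.cong refl) (simp add: algebra_simps)
    also have "\<dots> = M * (x (u - d) - x v)" using 2 assms
      by (simp add: sum_subtractf sum_distrib_left[symmetric] sum_delta_mult sum_delta_mult' algebra_simps)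
    finally show ?thesis using 2 dv by (simp add: b1_def L1_def)
  next
    case 3
    have W: "W1 d M (u*d+v) l = (if l = v then 1 else 0)" for l
      using 3 unfolding W1_def Let_def dv by simp
    have "(\<Sum>l<d. W1 d M (u*d+v) l * x l) = x v" using assms by (simp add: W sum_delta_mult)
    then show ?thesis using 3 dv by (simp add: b1_def L1_def)
  qed
qed

definition rr :: "nat \<Rightarrow> nat \<Rightarrow> nat" where "rr d q = (if q = 0 then r0 d else d div 2)"

definition W2 :: "nat \<Rightarrow> nat \<Rightarrow> nat \<Rightarrow> real" where
  "W2 d m n = (let i = m mod d; p = (m div d) mod 4; u = n div d; v = n mod d in
   if u < d then (if u = i then 1 else 0) else if u < 2*d then (if u - d = i then -1 else 0)
   else (if v = i \<and> even p then 1 else 0))"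

definition b2 :: "nat \<Rightarrow> nat \<Rightarrow> real" where
  "b2 d m = - real (rr d ((m div d) div 4)) - (if 2 \<le> (m div d) mod 4 then 1 else 0)"

definition w3 :: "nat \<Rightarrow> nat \<Rightarrow> real" where
  "w3 d m = (if (m div d) mod 4 = 0 \<or> (m div d) mod 4 = 3 then 1/2 else -1/2)"

definition cfun :: "real \<Rightarrow> nat \<Rightarrow> (nat \<Rightarrow> real) \<Rightarrow> nat \<Rightarrow> real" where
  "cfun M d x i = (\<Sum>v<d. relu (M * (x i - x v)) - relu (M * (x i - x v) - 1))"

definition hfun :: "real \<Rightarrow> real \<Rightarrow> real" where
  "hfun y t = relu (y + t) - relu t - relu (y + t - 1) + relu (t - 1)"

lemma L2_pre:
  assumes w: "w < 8" and i: "i < d"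
  shows "(\<Sum>n<(2*d+1)*d. W2 d (w*d+i) n * relu ((\<Sum>l<d. W1 d M n l * x l) + b1 d n))
    = cfun M d x i + (if even (w mod 4) then relu (x i) else 0)"
proof -
  have mi: "(w * d + i) mod d = i" "(w * d + i) div d = w" using i by auto
  define G where "G u = (\<Sum>v<d. W2 d (w*d+i) (u*d+v) * L1 M d x u v)" for u
  have "(\<Sum>n<(2*d+1)*d. W2 d (w*d+i) n * relu ((\<Sum>l<d. W1 d M n l * x l) + b1 d n))
     = (\<Sum>u<2*d+1. \<Sum>v<d. W2 d (w*d+i) (u*d+v) * relu ((\<Sum>l<d. W1 d M (u*d+v) l * x l) + b1 d (u*d+v)))"
    by (rule sum_blocks)
  also have "\<dots> = (\<Sum>u<2*d+1. G u)"
    unfolding G_def by (intro sum.cong refl) (simp add: L1_eval)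
  also have "\<dots> = (\<Sum>u<d. G u) + (\<Sum>u<d. G (d + u)) + G (2*d)"
    using sum_split_add[of G d d] by (simp add: mult_2)
  also have "(\<Sum>u<d. G u) = (\<Sum>v<d. relu (M * (x i - x v)))"
  proof -
    have "(\<Sum>u<d. G u) = (\<Sum>u<d. (if u = i then 1 else 0) * (\<Sum>v<d. relu (M * (x u - x v))))"
      unfolding G_def sum_distrib_left
      using i by (intro sum.cong refl) (auto simp: W2_def Let_def mi L1_def)
    also have "\<dots> = (\<Sum>v<d. relu (M * (x i - x v)))" using i by (rule sum_delta_mult)
    finally show ?thesis .
  qed
  also have "(\<Sum>u<d. G (d + u)) = - (\<Sum>v<d. relu (M * (x i - x v) - 1))"
  proof -
    have "(\<Sum>u<d. G (d + u)) = (\<Sum>u<d. (if u = i then 1 else 0) * (- (\<Sum>v<d. relu (M * (x u - x v) - 1))))"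
      unfolding G_def sum_distrib_left
      using i by (intro sum.cong refl) (auto simp: W2_def Let_def mi L1_def sum_negf)
    also have "\<dots> = - (\<Sum>v<d. relu (M * (x i - x v) - 1))" using i by (rule sum_delta_mult)
    finally show ?thesis .
  qed
  also have "G (2*d) = (if even (w mod 4) then relu (x i) else 0)"
  proof -
    have "G (2*d) = (\<Sum>v<d. (if v = i then 1 else 0) * (if even (w mod 4) then relu (x v) else 0))"
      unfolding G_def
      using i by (intro sum.cong refl) (auto simp: W2_def Let_def mi L1_def)
    also have "\<dots> = (if even (w mod 4) then relu (x i) else 0)" using i by (rule sum_delta_mult)
    finally show ?thesis .
  qed
  finally show ?thesis by (simp add: cfun_def sum_subtractf)
qed

lemma net_eval:
  "net3 d ((2*d+1)*d) (8*d) (W1 d M) (b1 d) (W2 d) (b2 d) (w3 d) 0 x =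
    (\<Sum>i<d. (hfun (relu (x i)) (cfun M d x i - rr d 0) + hfun (relu (x i)) (cfun M d x i - rr d 1)) / 2)"
proof -
  define T where "T w i = w3 d (w*d+i) * relu (cfun M d x i + (if even (w mod 4) then relu (x i) else 0) + b2 d (w*d+i))" for w i
  have "net3 d ((2*d+1)*d) (8*d) (W1 d M) (b1 d) (W2 d) (b2 d) (w3 d) 0 x =
     (\<Sum>w<8. \<Sum>i<d. w3 d (w*d+i) * relu ((\<Sum>n<(2*d+1)*d. W2 d (w*d+i) n * relu ((\<Sum>l<d. W1 d M n l * x l) + b1 d n)) + b2 d (w*d+i)))"
    unfolding net3_def by (simp add: sum_blocks)
  also have "\<dots> = (\<Sum>w<8. \<Sum>i<d. T w i)"
    apply (intro sum.cong refl)
    subgoal for w i using L2_pre[of w i d M x] by (simp add: T_def)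
    done
  also have "\<dots> = (\<Sum>i<d. \<Sum>w<8. T w i)" by (rule sum.swap)
  also have "\<dots> = (\<Sum>i<d. (hfun (relu (x i)) (cfun M d x i - rr d 0) + hfun (relu (x i)) (cfun M d x i - rr d 1)) / 2)"
  proof (intro sum.cong refl)
    fix i assume "i \<in> {..<d}"
    then have i: "i < d" by simp
    have dm: "(w * d + i) div d = w" for w using i by simp
    define y where "y = relu (x i)"
    define t where "t q = cfun M d x i - real (rr d q)" for q
    have Tv: "T w i = (if w mod 4 = 0 \<or> w mod 4 = 3 then 1/2 else -1/2) *
       relu ((if even (w mod 4) then y else 0) + t (w div 4) - (if 2 \<le> w mod 4 then 1 else 0))" for w
    proof -
      have "cfun M d x i + (if even (w mod 4) then relu (x i) else 0) + b2 d (w*d+i) =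
         (if even (w mod 4) then y else 0) + t (w div 4) - (if 2 \<le> w mod 4 then 1 else 0)"
        unfolding b2_def dm y_def t_def by simp
      then show ?thesis unfolding T_def w3_def dm by simp
    qed
    have "(\<Sum>w<8. T w i) = T 0 i + T 1 i + T 2 i + T 3 i + T 4 i + T 5 i + T 6 i + T 7 i"
      by (simp add: eval_nat_numeral)
    also have "\<dots> = (hfun y (t 0) + hfun y (t 1)) / 2"
      unfolding Tv by (simp add: hfun_def)
    finally show "(\<Sum>w<8. T w i) = (hfun (relu (x i)) (cfun M d x i - rr d 0) + hfun (relu (x i)) (cfun M d x i - rr d 1)) / 2"
      by (simp add: y_def t_def)
  qed
  finally show ?thesis .
qed




lemma h_bound: "0 \<le> y \<Longrightarrow> y \<le> 1 \<Longrightarrow> \<bar>hfun y t\<bar> \<le> 1"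
  unfolding hfun_def relu_def by (simp add: max_def)

lemma h_int:
  assumes "0 \<le> y" "y \<le> 1"
  shows "hfun y (real k - real r) = (if k = r then y else 0)"
proof -
  consider "k = r" | "k \<ge> r + 1" | "k + 1 \<le> r" by linarith
  then show ?thesis
  proof cases
    case 1 then show ?thesis using assms by (simp add: hfun_def relu_def)
  next
    case 2
    then have "real k - real r \<ge> 1" by linarith
    then show ?thesis using assms 2 by (simp add: hfun_def relu_def)
  next
    case 3
    then have "real k - real r \<le> -1" by linarith
    then show ?thesis using assms 3 by (simp add: hfun_def relu_def)
  qed
qed

abbreviation NET where "NET d M \<equiv> net3 d ((2*d+1)*d) (8*d) (W1 d M) (b1 d) (W2 d) (b2 d) (w3 d) 0"

lemma net_bound:
  assumes x: "\<forall>i<d. 0 \<le> x i \<and> x i \<le> 1"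
  shows "\<bar>NET d M x\<bar> \<le> real d"
proof -
  have "\<bar>NET d M x\<bar> \<le> (\<Sum>i<d. \<bar>(hfun (relu (x i)) (cfun M d x i - rr d 0) + hfun (relu (x i)) (cfun M d x i - rr d 1)) / 2\<bar>)"
    unfolding net_eval by (rule sum_abs)
  also have "\<dots> \<le> (\<Sum>i<d. 1)"
  proof (intro sum_mono)
    fix i assume "i \<in> {..<d}"
    then have r: "relu (x i) = x i" "0 \<le> x i" "x i \<le> 1" using x by (auto simp: relu_pos)
    show "\<bar>(hfun (relu (x i)) (cfun M d x i - rr d 0) + hfun (relu (x i)) (cfun M d x i - rr d 1)) / 2\<bar> \<le> 1"
      using h_bound[OF r(2,3), of "cfun M d x i - rr d 0"] h_bound[OF r(2,3), of "cfun M d x i - rr d 1"]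
      unfolding r(1) abs_divide
      using abs_triangle_ineq[of "hfun (x i) (cfun M d x i - rr d 0)" "hfun (x i) (cfun M d x i - rr d 1)"]
      by simp
  qed
  finally show ?thesis by simp
qed

lemma err_bound:
  assumes d: "1 \<le> d" and x: "\<forall>i<d. 0 \<le> x i \<and> x i \<le> 1"
  shows "(NET d M x - med d x)\<^sup>2 \<le> 4 * real d ^ 2"
proof -
  have a: "\<bar>NET d M x\<bar> \<le> real d" by (rule net_bound[OF x])
  have b: "0 \<le> med d x" "med d x \<le> 1" using med_bound[OF d x] by auto
  have c: "\<bar>NET d M x - med d x\<bar> \<le> 2 * real d" using a b d by linarith
  have "(NET d M x - med d x)\<^sup>2 = \<bar>NET d M x - med d x\<bar>\<^sup>2" by simp
  also have "\<dots> \<le> (2 * real d)\<^sup>2" using c by (intro power_mono) auto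
  finally show ?thesis by (simp add: power_mult_distrib)
qed

lemma rank_sum:
  fixes x :: "nat \<Rightarrow> real"
  assumes inj: "\<forall>i<d. \<forall>j<d. i \<noteq> j \<longrightarrow> x i \<noteq> x j" and r: "r < d"
  shows "(\<Sum>i<d. if card {j. j < d \<and> x j < x i} = r then x i else 0) = sort (map x [0..<d]) ! r"
proof -
  let ?L = "sort (map x [0..<d])"
  have len: "length ?L = d" by simp
  have "inj_on x {0..<d}" unfolding inj_on_def using inj by (metis atLeastLessThan_iff)
  then have "distinct (map x [0..<d])" by (simp add: distinct_map)
  then have dist: "distinct ?L" by simp
  have srt: "sorted ?L" by simp
  have rank: "card {j. j < d \<and> x j < ?L ! q} = q" if q: "q < d" for q
  proof -
    have "{p. p < d \<and> ?L ! p < ?L ! q} = {..<q}"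
    proof (intro set_eqI iffI)
      fix p assume p: "p \<in> {p. p < d \<and> ?L ! p < ?L ! q}"
      show "p \<in> {..<q}"
      proof (rule ccontr)
        assume "p \<notin> {..<q}"
        then have qp: "q \<le> p" by simp
        have pl: "p < length ?L" using p len by simp
        have "?L ! q \<le> ?L ! p" by (rule sorted_nth_mono[OF srt qp pl])
        then show False using p by auto
      qed
    next
      fix p assume p: "p \<in> {..<q}"
      then have "?L ! p \<le> ?L ! q" using q srt len by (auto intro: sorted_nth_mono)
      moreover have "?L ! p \<noteq> ?L ! q" using p q dist len by (auto simp: nth_eq_iff_index_eq)
      ultimately show "p \<in> {p. p < d \<and> ?L ! p < ?L ! q}" using p q by auto
    qed
    then show ?thesis using cnt_sorted[of d x "?L ! q"] by simp
  qed
  obtain i0 where i0: "i0 < d" "?L ! r = x i0" using nth_sort_in[OF r] by blast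
  have cond: "card {j. j < d \<and> x j < x i} = r \<longleftrightarrow> i = i0" if i: "i < d" for i
  proof -
    have "x i \<in> set ?L" using i by auto
    then obtain q where q0: "q < length ?L" "?L ! q = x i" by (metis in_set_conv_nth)
    then have q: "q < d" "?L ! q = x i" using len by auto
    have "card {j. j < d \<and> x j < x i} = q" using rank[OF q(1)] q(2) by simp
    moreover have "q = r \<longleftrightarrow> i = i0"
    proof
      assume "q = r" then have "x i = x i0" using q i0 by simp
      then show "i = i0" using inj i i0 by blast
    next
      assume "i = i0" then have "?L ! q = ?L ! r" using q i0 by simp
      then show "q = r" using q r dist len by (simp add: nth_eq_iff_index_eq)
    qed
    ultimately show ?thesis by simp
  qed
  have "(\<Sum>i<d. if card {j. j < d \<and> x j < x i} = r then x i else 0) = (\<Sum>i<d. if i = i0 then x i0 else 0)"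
    by (intro sum.cong refl) (auto simp: cond)
  also have "\<dots> = x i0" using i0 by simp
  finally show ?thesis using i0 by simp
qed

lemma step_exact:
  assumes M: "0 < M" and sep: "i \<noteq> j \<longrightarrow> 1 / M \<le> \<bar>a - b\<bar>" and ij: "i = j \<longrightarrow> a = b"
  shows "relu (M * (a - b)) - relu (M * (a - b) - 1) = (if b < a then 1 else 0)"
proof (cases "b < a")
  case True
  then have "i \<noteq> j" using ij by auto
  then have "1 / M \<le> a - b" using sep True by simp
  then have "1 \<le> M * (a - b)" using M by (simp add: field_simps)
  then show ?thesis using True by (simp add: relu_def)
next
  case False
  then have "M * (a - b) \<le> 0" using M by (simp add: mult_nonneg_nonpos)
  then show ?thesis using False by (simp add: relu_def)
qed

lemma net_good:
  assumes d: "1 \<le> d" and M: "0 < M" and x: "\<forall>i<d. 0 \<le> x i \<and> x i \<le> 1"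
    and sep: "\<forall>i<d. \<forall>j<d. i \<noteq> j \<longrightarrow> 1 / M \<le> \<bar>x i - x j\<bar>"
  shows "NET d M x = med d x"
proof -
  have inj: "\<forall>i<d. \<forall>j<d. i \<noteq> j \<longrightarrow> x i \<noteq> x j"
    using sep M by (metis abs_zero divide_pos_pos not_less right_minus_eq zero_less_one)
  have cf: "cfun M d x i = real (card {j. j < d \<and> x j < x i})" if i: "i < d" for i
  proof -
    have "cfun M d x i = (\<Sum>v<d. if x v < x i then 1 else 0)"
      unfolding cfun_def
    proof (intro sum.cong refl)
      fix v assume "v \<in> {..<d}"
      then show "relu (M * (x i - x v)) - relu (M * (x i - x v) - 1) = (if x v < x i then 1 else 0)"
        using step_exact[OF M, of i v "x i" "x v"] sep i by auto
    qed
    also have "\<dots> = real (\<Sum>v<d. if x v < x i then 1 else 0::nat)"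
      unfolding of_nat_sum by (intro sum.cong refl) simp
    finally show ?thesis by (simp add: count_sum)
  qed
  have hv: "hfun (relu (x i)) (cfun M d x i - rr d q) =
      (if card {j. j < d \<and> x j < x i} = rr d q then x i else 0)" if i: "i < d" for i q
    using x i cf[OF i] h_int[of "x i"] by (simp add: relu_pos)
  have "NET d M x = ((\<Sum>i<d. if card {j. j < d \<and> x j < x i} = rr d 0 then x i else 0)
     + (\<Sum>i<d. if card {j. j < d \<and> x j < x i} = rr d 1 then x i else 0)) / 2"
    unfolding net_eval sum_divide_distrib[symmetric] sum.distrib[symmetric]
    by (intro arg_cong[where f="\<lambda>t. t / 2"] sum.cong refl) (simp add: hv)
  also have "\<dots> = (sort (map x [0..<d]) ! r0 d + sort (map x [0..<d]) ! (d div 2)) / 2"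
    using rank_sum[OF inj r0_less[OF d]] rank_sum[OF inj r1_less[OF d]] by (simp add: rr_def)
  also have "\<dots> = med d x" using med_alt[OF d] by simp
  finally show ?thesis .
qed




lemma meas_net: "(\<lambda>x. NET d M x) \<in> borel_measurable (unif_cube d)"
  unfolding net3_def relu_def unif_cube_def by measurable

lemma main_bound:
  assumes d: "1 \<le> d" and M: "0 < M"
  shows "integrable (unif_cube d) (\<lambda>x. (NET d M x - med d x)\<^sup>2) \<and>
    (\<integral>x. (NET d M x - med d x)\<^sup>2 \<partial>unif_cube d) \<le> 12 * real d ^ 4 / M"
proof -
  interpret P: prob_space "unif_cube d" by (rule cube_prob)
  define f where "f x = (NET d M x - med d x)\<^sup>2" for x
  define B where "B i j = {x \<in> space (unif_cube d). 0 \<le> x j \<and> x j \<le> 1 \<and> \<bar>x i - x j\<bar> < 1 / M}" for i j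
  define g where "g x = 4 * real d ^ 2 * (\<Sum>i<d. \<Sum>j\<in>{..<d} - {i}. indicator (B i j) x)" for x
  have comp: "(\<lambda>x. x j) \<in> borel_measurable (unif_cube d)" if "j < d" for j
  proof -
    have "(\<lambda>x. x j) \<in> measurable (unif_cube d) U"
      unfolding unif_cube_def using that by (intro measurable_component_singleton) auto
    then show ?thesis by (simp add: measurable_def)
  qed
  have Bsets: "B i j \<in> sets (unif_cube d)" if "i < d" "j < d" for i j
  proof -
    note [measurable] = comp[OF that(1)] comp[OF that(2)]
    show ?thesis unfolding B_def by measurable
  qed
  have fm: "f \<in> borel_measurable (unif_cube d)"
    unfolding f_def using meas_net meas_med[OF d]
    by (intro borel_measurable_power borel_measurable_diff)
  have fb: "AE x in unif_cube d. norm (f x) \<le> 4 * real d ^ 2"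
    using AE_cube[of d]
    by eventually_elim (use err_bound[OF d] in \<open>auto simp: f_def\<close>)
  have fi: "integrable (unif_cube d) f"
    by (rule P.integrable_const_bound[OF fb fm])
  have Bfin: "emeasure (unif_cube d) (B i j) < \<infinity>" for i j
    by (simp add: P.emeasure_eq_measure)
  have si: "integrable (unif_cube d) (\<lambda>x. \<Sum>i<d. \<Sum>j\<in>{..<d} - {i}. indicator (B i j) x :: real)"
  proof (rule Bochner_Integration.integrable_sum)
    fix i assume i: "i \<in> {..<d}"
    show "integrable (unif_cube d) (\<lambda>x. \<Sum>j\<in>{..<d} - {i}. indicator (B i j) x :: real)"
    proof (rule Bochner_Integration.integrable_sum)
      fix j assume j: "j \<in> {..<d} - {i}"
      show "integrable (unif_cube d) (indicator (B i j) :: _ \<Rightarrow> real)"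
        using i j Bsets Bfin by auto
    qed
  qed
  have gi: "integrable (unif_cube d) g"
    unfolding g_def using si by (rule integrable_mult_right)
  have fg: "AE x in unif_cube d. f x \<le> g x"
    using AE_cube[of d] AE_space
  proof eventually_elim
    case (elim x)
    have gnn: "0 \<le> g x" unfolding g_def by (intro mult_nonneg_nonneg sum_nonneg) auto
    show "f x \<le> g x"
    proof (cases "\<forall>i<d. \<forall>j<d. i \<noteq> j \<longrightarrow> 1 / M \<le> \<bar>x i - x j\<bar>")
      case True
      then have "f x = 0" unfolding f_def using net_good[OF d M elim(1) True] by simp
      then show ?thesis using gnn by simp
    next
      case False
      then obtain i j where ij: "i < d" "j < d" "i \<noteq> j" "\<bar>x i - x j\<bar> < 1 / M" by auto
      have xB: "x \<in> B i j" using ij elim by (auto simp: B_def)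
      have "indicator (B i j) x \<le> (\<Sum>j'\<in>{..<d} - {i}. indicator (B i j') x :: real)"
        by (rule member_le_sum) (use ij in auto)
      then have "1 \<le> (\<Sum>j'\<in>{..<d} - {i}. indicator (B i j') x :: real)"
        using xB by simp
      also have "\<dots> \<le> (\<Sum>i'<d. \<Sum>j'\<in>{..<d} - {i'}. indicator (B i' j') x :: real)"
        using ij by (intro member_le_sum[of i, where f="\<lambda>i'. \<Sum>j'\<in>{..<d} - {i'}. indicator (B i' j') x"] sum_nonneg) auto
      finally have S: "1 \<le> (\<Sum>i'<d. \<Sum>j'\<in>{..<d} - {i'}. indicator (B i' j') x :: real)" .
      have "4 * real d ^ 2 \<le> g x" unfolding g_def using mult_left_mono[OF S, of "4 * real d ^ 2"] by simp
      moreover have "f x \<le> 4 * real d ^ 2" unfolding f_def using err_bound[OF d elim(1)] .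
      ultimately show ?thesis by linarith
    qed
  qed
  have "integral\<^sup>L (unif_cube d) f \<le> integral\<^sup>L (unif_cube d) g"
    by (rule integral_mono_AE[OF fi gi fg])
  also have "integral\<^sup>L (unif_cube d) g = 4 * real d ^ 2 * (\<Sum>i<d. \<Sum>j\<in>{..<d} - {i}. measure (unif_cube d) (B i j))"
  proof -
    have ii: "integrable (unif_cube d) (indicator (B i j) :: _ \<Rightarrow> real)" if "i < d" "j < d" for i j
      using that Bsets Bfin by auto
    have e0: "integral\<^sup>L (unif_cube d) (indicator (B i j) :: _ \<Rightarrow> real) = measure (unif_cube d) (B i j)" for i j
    proof -
      have "B i j \<inter> space (unif_cube d) = B i j" by (auto simp: B_def)
      then show ?thesis by simp
    qed
    have e1: "integral\<^sup>L (unif_cube d) (\<lambda>x. \<Sum>j\<in>{..<d} - {i}. indicator (B i j) x :: real)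
       = (\<Sum>j\<in>{..<d} - {i}. measure (unif_cube d) (B i j))" if i: "i < d" for i
      by (subst Bochner_Integration.integral_sum) (use i ii e0 in auto)
    have ii2: "integrable (unif_cube d) (\<lambda>x. \<Sum>j\<in>{..<d} - {i}. indicator (B i j) x :: real)" if i: "i < d" for i
      by (rule Bochner_Integration.integrable_sum) (use i ii in auto)
    have "integral\<^sup>L (unif_cube d) (\<lambda>x. \<Sum>i<d. \<Sum>j\<in>{..<d} - {i}. indicator (B i j) x :: real)
       = (\<Sum>i<d. \<Sum>j\<in>{..<d} - {i}. measure (unif_cube d) (B i j))"
      by (subst Bochner_Integration.integral_sum) (use ii2 e1 in auto)
    then show ?thesis unfolding g_def by simp
  qed
  also have "\<dots> \<le> 4 * real d ^ 2 * (\<Sum>i<d. \<Sum>j<d. 3 * (1 / M))"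
  proof (intro mult_left_mono sum_mono)
    fix i assume i: "i \<in> {..<d}"
    have "(\<Sum>j\<in>{..<d} - {i}. measure (unif_cube d) (B i j)) \<le> (\<Sum>j\<in>{..<d} - {i}. 3 * (1 / M))"
      unfolding B_def using i M by (intro sum_mono pair_close) auto
    also have "\<dots> \<le> (\<Sum>j<d. 3 * (1 / M))"
      using M by (intro sum_mono2) auto
    finally show "(\<Sum>j\<in>{..<d} - {i}. measure (unif_cube d) (B i j)) \<le> (\<Sum>j<d. 3 * (1 / M))" .
  qed simp
  also have "\<dots> = 12 * real d ^ 4 / M" by (simp add: power2_eq_square power4_eq_xxxx)
  finally show ?thesis using fi unfolding f_def by simp
qed

lemma rr_le: "rr d q \<le> d div 2" by (auto simp: rr_def r0_def)

lemma params_ok: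
  assumes d: "1 \<le> d" and M: "real d \<le> M" "1 \<le> M"
  shows "params_bounded d k1 k2 (W1 d M) (b1 d) (W2 d) (b2 d) (w3 d) 0 M"
proof -
  have W1b: "\<bar>W1 d M n l\<bar> \<le> M" for n l
    using M by (auto simp: W1_def Let_def abs_mult)
  have b1b: "\<bar>b1 d n\<bar> \<le> M" for n using M by (auto simp: b1_def)
  have W2b: "\<bar>W2 d m n\<bar> \<le> M" for m n using M by (auto simp: W2_def Let_def)
  have b2b: "\<bar>b2 d m\<bar> \<le> M" for m
  proof -
    have "rr d (m div d div 4) \<le> d div 2" by (rule rr_le)
    then have "rr d (m div d div 4) + 1 \<le> d" using d by presburger
    then have "real (rr d (m div d div 4) + 1) \<le> real d" by (rule of_nat_mono)
    then have "real (rr d (m div d div 4)) + 1 \<le> real d" by simp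
    then show ?thesis using M unfolding b2_def by auto
  qed
  have w3b: "\<bar>w3 d m\<bar> \<le> M" for m using M by (auto simp: w3_def)
  show ?thesis unfolding params_bounded_def using W1b b1b W2b b2b w3b M by auto
qed

lemma zero_net:
  assumes d: "1 \<le> d"
  shows "integrable (unif_cube d) (\<lambda>x. (net3 d 0 0 (\<lambda>_ _. 0) (\<lambda>_. 0) (\<lambda>_ _. 0) (\<lambda>_. 0) (\<lambda>_. 0) 0 x - med d x)\<^sup>2) \<and>
    (\<integral>x. (net3 d 0 0 (\<lambda>_ _. 0) (\<lambda>_. 0) (\<lambda>_ _. 0) (\<lambda>_. 0) (\<lambda>_. 0) 0 x - med d x)\<^sup>2 \<partial>unif_cube d) \<le> 1"
proof -
  interpret P: prob_space "unif_cube d" by (rule cube_prob)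
  have e: "net3 d 0 0 (\<lambda>_ _. 0) (\<lambda>_. 0) (\<lambda>_ _. 0) (\<lambda>_. 0) (\<lambda>_. 0) 0 x = 0" for x
    by (simp add: net3_def)
  have fm: "(\<lambda>x. (med d x)\<^sup>2) \<in> borel_measurable (unif_cube d)"
    using meas_med[OF d] by (intro borel_measurable_power)
  have fb: "AE x in unif_cube d. norm ((med d x)\<^sup>2) \<le> 1"
    using AE_cube[of d]
  proof eventually_elim
    case (elim x)
    then have "0 \<le> med d x" "med d x \<le> 1" using med_bound[OF d] by auto
    then show ?case by (simp add: abs_le_iff power_le_one)
  qed
  have fi: "integrable (unif_cube d) (\<lambda>x. (med d x)\<^sup>2)"
    by (rule P.integrable_const_bound[OF fb fm])
  have "(\<integral>x. (med d x)\<^sup>2 \<partial>unif_cube d) \<le> (\<integral>x. 1 \<partial>unif_cube d)"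
    using fb by (intro integral_mono_AE[OF fi]) auto
  then show ?thesis using fi by (simp add: e P.prob_space)
qed

theorem theorem3p1:
  "\<exists>C::real. \<forall>d::nat. \<forall>\<epsilon>::real. d \<ge> 1 \<longrightarrow> \<epsilon> > 0 \<longrightarrow>
     (\<exists>k1 k2 W1 b1 W2 b2 w3 b3.
        real (max k1 k2) \<le> C * real d ^ 2 \<and>
        params_bounded d k1 k2 W1 b1 W2 b2 w3 b3 (12 * real d ^ 4 / \<epsilon>) \<and>
        integrable (unif_cube d) (\<lambda>x. (net3 d k1 k2 W1 b1 W2 b2 w3 b3 x - med d x)\<^sup>2) \<and>
        (\<integral>x. (net3 d k1 k2 W1 b1 W2 b2 w3 b3 x - med d x)\<^sup>2 \<partial>unif_cube d) \<le> \<epsilon>)"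
proof (rule exI[of _ 8], intro allI impI)
  fix d :: nat and \<epsilon> :: real
  assume d: "1 \<le> d" and e: "0 < \<epsilon>"
  show "\<exists>k1 k2 W1 b1 W2 b2 w3 b3.
        real (max k1 k2) \<le> 8 * real d ^ 2 \<and>
        params_bounded d k1 k2 W1 b1 W2 b2 w3 b3 (12 * real d ^ 4 / \<epsilon>) \<and>
        integrable (unif_cube d) (\<lambda>x. (net3 d k1 k2 W1 b1 W2 b2 w3 b3 x - med d x)\<^sup>2) \<and>
        (\<integral>x. (net3 d k1 k2 W1 b1 W2 b2 w3 b3 x - med d x)\<^sup>2 \<partial>unif_cube d) \<le> \<epsilon>"
  proof (cases "1 \<le> \<epsilon>")
    case True
    have pb: "params_bounded d 0 0 (\<lambda>_ _. 0) (\<lambda>_. 0) (\<lambda>_ _. 0) (\<lambda>_. 0) (\<lambda>_. 0) 0 (12 * real d ^ 4 / \<epsilon>)"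
      using e by (simp add: params_bounded_def)
    show ?thesis
      using zero_net[OF d] True pb
      by (intro exI[of _ 0] exI[of _ "\<lambda>_ _. 0"] exI[of _ "\<lambda>_. 0"]) auto
  next
    case False
    define M where "M = 12 * real d ^ 4 / \<epsilon>"
    have d1: "1 \<le> real d" using d by simp
    have "real d \<le> real d ^ 4" using d1 by (simp add: power_increasing[of 1 4 "real d", simplified])
    moreover have "12 * real d ^ 4 \<le> M"
      unfolding M_def using False e d1 by (simp add: le_divide_eq)
    ultimately have M1: "real d \<le> M" "1 \<le> M" using d1 by linarith+
    have M0: "0 < M" using M1 by simp
    have wid: "real (max ((2*d+1)*d) (8*d)) \<le> 8 * real d ^ 2"
    proof -
      have "(2*d+1)*d \<le> 8 * d^2" using d by (simp add: power2_eq_square)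
      moreover have "8 * d \<le> 8 * d^2" using d by (simp add: power2_eq_square)
      ultimately have "max ((2*d+1)*d) (8*d) \<le> 8 * d^2" by simp
      then have "real (max ((2*d+1)*d) (8*d)) \<le> real (8 * d^2)" by (rule of_nat_mono)
      then show ?thesis by simp
    qed
    have eq: "12 * real d ^ 4 / M = \<epsilon>" unfolding M_def using e d1 by simp
    have mb: "integrable (unif_cube d) (\<lambda>x. (NET d M x - med d x)\<^sup>2) \<and>
        (\<integral>x. (NET d M x - med d x)\<^sup>2 \<partial>unif_cube d) \<le> \<epsilon>"
      using main_bound[OF d M0] eq by simp
    show ?thesis
      using wid params_ok[OF d M1, of "(2*d+1)*d" "8*d"] mb
      unfolding M_def[symmetric]
      by blast
  qed
qed


end
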